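(* Let $\varphi=\frac{1+\sqrt5}{2}$. Let $z\in\{0,1\}^*$, $n=[z]_F$ and $n'=[z0]_F$, and suppose $n\geq 1$ and ${\bf f}[n]=a$. Then $\lceil n/\varphi^2\rceil=\lceil n'/\varphi^3\rceil$.
   Context: Fibonacci numbers: $F_0=0$, $F_1=1$, $F_{m+2}=F_{m+1}+F_m$. For a binary word $k_m\cdots k_0$, $[k_m\cdots k_0]_F=\sum_{i=0}^m k_iF_{i+2}$. Standard Fibonacci words: $f_{-1}=b$, $f_0=a$, $f_{m+1}=f_mf_{m-1}$; the Fibonacci word ${\bf f}=\lim f_m=abaababaab\cdots$ is indexed from ${\bf f}[1]=a$. *)

theory Defs
  imports Complex_Main "HOL-Number_Theory.Fib"
begin

fun fibval :: "nat list \<Rightarrow> nat" where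
  "fibval [] = 0"
| "fibval (k # ks) = k * fib (length ks + 2) + fibval ks"

datatype letter = a | b

text \<open>Standard Fibonacci words, shifted by one: fword m = f_(m-1),
  so fword 0 = f_(-1) = b, fword 1 = f_0 = a, f_(m+1) = f_m f_(m-1).\<close>
fun fword :: "nat \<Rightarrow> letter list" where
  "fword 0 = [b]"
| "fword (Suc 0) = [a]"
| "fword (Suc (Suc m)) = fword (Suc m) @ fword m"

text \<open>The infinite Fibonacci word, 1-indexed: f[n] for n >= 1. Since each f_m is a prefix of
  f_(m+1) and |f_(n+1)| = F_(n+3) >= n, the n-th letter of the limit is read off f_(n+1).\<close>
definition fibword :: "nat \<Rightarrow> letter" where
  "fibword n = fword (n + 2) ! (n - 1)"

definition phi :: real where
  "phi = (1 + sqrt 5) / 2"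

end

theory Submission
  imports Defs
begin

lemma sq5_aux: "\<forall>s q::int. nat \<bar>q\<bar> = m \<longrightarrow> q \<noteq> 0 \<longrightarrow> s^2 \<noteq> 5 * q^2"
proof (induction m rule: less_induct)
  case (less m)
  show ?case
  proof (intro allI impI)
    fix s q :: int
    assume m: "nat \<bar>q\<bar> = m" and q: "q \<noteq> 0"
    show "s^2 \<noteq> 5 * q^2"
    proof
      assume h: "s^2 = 5 * q^2"
      have sq: "x^2 mod 5 = 0 \<Longrightarrow> x mod 5 = 0" for x :: int
      proof -
        assume "x^2 mod 5 = 0"
        moreover have "x^2 mod 5 = (x mod 5)^2 mod 5" by (simp add: power_mod)
        moreover have "x mod 5 \<in> {0,1,2,3,4}" by auto
        ultimately show ?thesis by auto
      qed
      have "s mod 5 = 0" using sq[of s] h by simp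
      then obtain s' where s': "s = 5 * s'" by auto
      have h2: "q^2 = 5 * s'^2" using h s' by (simp add: power_mult_distrib)
      have "q mod 5 = 0" using sq[of q] h2 by simp
      then obtain q' where q': "q = 5 * q'" by auto
      have "q' \<noteq> 0" using q q' by auto
      have lt: "nat \<bar>q'\<bar> < m" using m q' q by auto
      have "s'^2 = 5 * q'^2" using h2 q' by (simp add: power_mult_distrib)
      then show False using less[OF lt] \<open>q' \<noteq> 0\<close> by blast
    qed
  qed
qed

lemma norm_nz: "(q::int) \<noteq> 0 \<Longrightarrow> t^2 + q*t - q^2 \<noteq> 0"
proof
  assume q: "q \<noteq> 0" and h: "t^2 + q*t - q^2 = 0"
  have "(2*t+q)^2 = 5*q^2" using h by (simp add: power2_eq_square algebra_simps)
  then show False using sq5_aux q by blast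
qed

definition rr :: real where "rr = phi - 1"

lemma sqrt5_bounds: "(22/10) < sqrt 5" "sqrt 5 < 224/100"
proof -
  show "(22/10) < sqrt 5" by (rule real_less_rsqrt) (simp add: power2_eq_square)
  have "sqrt 5 < sqrt ((2.24::real)^2)" by (rule real_sqrt_less_mono) (simp add: power2_eq_square)
  then show "sqrt 5 < 224/100" by simp
qed

lemma phi_sq: "phi^2 = phi + 1"
  unfolding phi_def by (simp add: power2_eq_square field_simps)

lemma rr_bounds: "(6/10) < rr" "rr < (62/100)"
  using sqrt5_bounds unfolding rr_def phi_def by auto

lemma rr_phi: "rr * phi = 1"
  using phi_sq unfolding rr_def by (simp add: power2_eq_square algebra_simps)

lemma phi_rr: "phi = 1 + rr" unfolding rr_def by simp

lemma rr_sq: "rr^2 = 1 - rr"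
proof -
  have "rr * (1 + rr) = 1" using rr_phi phi_rr by simp
  then show ?thesis by (simp add: power2_eq_square algebra_simps)
qed

lemma binet1: "real (fib (Suc j)) - phi * fib j = (1 - phi)^j"
proof (induction j)
  case 0 then show ?case by simp
next
  case (Suc j)
  have "real (fib (Suc (Suc j))) = fib (Suc j) + fib j" by simp
  moreover have "phi * phi * fib j = (phi+1)*fib j" using phi_sq by (simp add: power2_eq_square)
  ultimately have "real (fib (Suc (Suc j))) - phi * fib (Suc j) = (1-phi) * (real (fib (Suc j)) - phi * fib j)"
    by (simp add: algebra_simps)
  also have "\<dots> = (1-phi) * (1-phi)^j" using Suc by simp
  finally show ?case by simp
qed

lemma binet2: "real (fib i) * (phi + rr) = phi^i - (1 - phi)^i"
proof (induction i rule: fib.induct)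
  case 1 then show ?case by simp
next
  case 2 then show ?case by (simp add: rr_def)
next
  case (3 n)
  have e1: "phi^(Suc (Suc n)) = phi^(Suc n) + phi^n"
  proof -
    have "phi^(Suc (Suc n)) = phi^2 * phi^n" by (simp add: power2_eq_square)
    then show ?thesis using phi_sq by (simp add: algebra_simps)
  qed
  have e2: "(1-phi)^(Suc (Suc n)) = (1-phi)^(Suc n) + (1-phi)^n"
  proof -
    have h: "(1-phi)^2 = (1-phi) + 1" using phi_sq by (simp add: power2_eq_square algebra_simps)
    have "(1-phi)^(Suc (Suc n)) = (1-phi)^2 * (1-phi)^n" by (simp add: power2_eq_square)
    also have "\<dots> = ((1-phi) + 1) * (1-phi)^n" by (simp only: h)
    also have "\<dots> = (1-phi)^(Suc n) + (1-phi)^n" by (simp add: algebra_simps)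
    finally show ?thesis .
  qed
  have "real (fib (Suc (Suc n))) = fib (Suc n) + fib n" by simp
  then show ?case using 3 e1 e2 by (simp add: algebra_simps)
qed


lemma gen_lin: "A' = k*F3 + A \<Longrightarrow> B' = k*F2 + B \<Longrightarrow> F3 - phi*F2 = P \<Longrightarrow>
  A' - phi*B' = k*P + (A - phi*B)" for A' A B' B k F3 F2 P :: real
  by (simp add: algebra_simps)

lemma Estep: "real (fibval ((k # ks) @ [0])) - phi * fibval (k # ks)
   = real k * (1-phi)^(length ks + 2) + (real (fibval (ks @ [0])) - phi * fibval ks)"
proof -
  have "real (fib (Suc (length ks + 2))) - phi * fib (length ks + 2) = (1-phi)^(length ks + 2)"
    by (rule binet1)
  moreover have "real (fibval ((k # ks) @ [0])) = real k * real (fib (Suc (length ks + 2))) + real (fibval (ks@[0]))"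
    by (simp del: fib.simps)
  moreover have "real (fibval (k # ks)) = real k * real (fib (length ks + 2)) + real (fibval ks)"
    by (simp del: fib.simps)
  ultimately show ?thesis using gen_lin by blast
qed

lemma Ebound: "set z \<subseteq> {0,1} \<Longrightarrow>
  (even (length z) \<longrightarrow> real (fibval (z @ [0])) - phi * fibval z \<le> rr - phi * rr^(length z + 2)
      \<and> real (fibval (z @ [0])) - phi * fibval z \<ge> phi * rr^(length z + 3) - rr^2) \<and>
  (odd (length z) \<longrightarrow> real (fibval (z @ [0])) - phi * fibval z \<le> rr - phi * rr^(length z + 3)
      \<and> real (fibval (z @ [0])) - phi * fibval z \<ge> phi * rr^(length z + 2) - rr^2)"
proof (induction z)
  case Nil
  have h1: "rr - phi * rr^(0+2) = 0" using rr_phi by (simp add: power2_eq_square algebra_simps)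
  have h2: "phi * rr^(0+3) - rr^2 = 0" using rr_phi by (simp add: power3_eq_cube power2_eq_square algebra_simps)
  have L: "length ([]::nat list) = 0" by simp
  have E0: "real (fibval ([] @ [0])) - phi * real (fibval []) = 0" by simp
  show ?case unfolding L E0 h1 h2 by simp
next
  case (Cons k ks)
  define m where "m = length ks"
  define E where "E = real (fibval (ks @ [0])) - phi * fibval ks"
  define X where "X = rr^(m+2)"
  have k: "k = 0 \<or> k = 1" using Cons.prems by auto
  have IH: "(even m \<longrightarrow> E \<le> rr - phi * X \<and> E \<ge> phi * (X * rr) - rr^2) \<and>
            (odd m \<longrightarrow> E \<le> rr - phi * (X * rr) \<and> E \<ge> phi * X - rr^2)"
  proof -
    have "set ks \<subseteq> {0,1}" using Cons.prems by auto
    note I = Cons.IH[OF this]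
    have p: "rr^(length ks+2)*rr = rr^(length ks + 3)" by (simp add: power_add power3_eq_cube power2_eq_square)
    show ?thesis unfolding E_def X_def m_def p by (rule I)
  qed
  have pw: "(1-phi)^(m+2) = (-1)^m * X"
  proof -
    have "1 - phi = (-1) * rr" unfolding rr_def by simp
    then have "(1-phi)^(m+2) = ((-1) * rr)^(m+2)" by simp
    also have "\<dots> = (-1)^(m+2) * rr^(m+2)" by (rule power_mult_distrib)
    finally show ?thesis by (simp add: X_def)
  qed
  have step: "real (fibval ((k # ks) @ [0])) - phi * fibval (k # ks) = real k * ((-1)^m * X) + E"
    using Estep[of k ks] pw by (simp add: E_def m_def)
  have r1: "phi * rr = 1" using rr_phi by (simp add: algebra_simps)
  have X0: "X > 0" using rr_bounds by (simp add: X_def)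
  have a1: "phi * (X * rr) = X" using r1 by (simp add: algebra_simps)
  have a2: "phi * (X * rr^2) = X * rr" using r1 by (simp add: power2_eq_square algebra_simps)
  have rel: "phi = 1 + rr" by (rule phi_rr)
  have lenS: "length (k # ks) = m + 1" by (simp add: m_def)
  have p3: "rr^(m+1+3) = X * rr^2"
  proof -
    have e: "m+1+3 = (m+2)+2" by simp
    show ?thesis unfolding e X_def by (rule power_add)
  qed
  have p2: "rr^(m+1+2) = X * rr" unfolding X_def power_Suc2[symmetric] by (simp add: algebra_simps)
  show ?case
  proof (cases "even m")
    case True
    then have s: "real k * ((-1)^m * X) = real k * X" by simp
    have "X - phi * X = - (X * rr)" unfolding rel by (simp add: algebra_simps)
    then show ?thesis unfolding step s lenS p3 p2 a2 a1 using IH True k X0 a1 by auto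
  next
    case False
    then have s: "real k * ((-1)^m * X) = - real k * X" by simp
    have "phi * X - X = X * rr" unfolding rel by (simp add: algebra_simps)
    then show ?thesis unfolding step s lenS p3 p2 a2 a1 using IH False k X0 a1 by auto
  qed
qed


lemma far:
  fixes q :: nat and t :: int
  assumes j: "j \<ge> 3" and q1: "1 \<le> q" and q2: "q \<le> fib (j+1) + 1"
  shows "\<bar>real q * rr - t\<bar> > rr^(j+2)"
proof (rule ccontr)
  assume "\<not> ?thesis"
  then have c: "\<bar>real q * rr - t\<bar> \<le> rr^(j+2)" by simp
  have rb: "(6/10) < rr" "rr < (62/100)" by (rule rr_bounds)+
  have d1: "rr^(j+2) \<le> rr^5" using rb j by (intro power_decreasing) auto
  have d2: "rr^5 \<le> (62/100)^5" using rb by (intro power_mono) auto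
  have d3: "((62/100)::real)^5 < (917/10000)" by (simp add: power_divide)
  have small: "rr^(j+2) < (917/10000)" using d1 d2 d3 by linarith
  have qr: "real q * rr \<ge> 0" using rb by simp
  have c1: "real q * rr - t \<le> rr^(j+2)" "t - real q * rr \<le> rr^(j+2)" using c by (auto simp: abs_le_iff)
  have "real_of_int t > -1" using c1 small qr by linarith
  then have t0: "t \<ge> 0" by simp
  have N: "t^2 + int q * t - (int q)^2 \<noteq> 0" using q1 norm_nz[of "int q" t] by simp
  then have N1: "\<bar>real_of_int (t^2 + int q * t - (int q)^2)\<bar> \<ge> 1"
    by (metis of_int_1_le_iff of_int_abs zero_less_abs_iff int_one_le_iff_zero_less)
  have pr: "phi - rr = 1" unfolding rr_def by simp
  have rp: "rr * phi = 1" by (rule rr_phi)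
  have eq: "real_of_int (t^2 + int q * t - (int q)^2) = - ((real q * rr - t) * (real q * phi + t))"
  proof -
    have "(real q * rr - t) * (real q * phi + t) = real q * real q * (rr * phi) - real q * t * (phi - rr) - t * t"
      by (simp add: algebra_simps)
    also have "\<dots> = real q * real q - real q * t - t*t" using pr rp by simp
    finally show ?thesis by (simp add: power2_eq_square algebra_simps)
  qed
  have pos: "real q * phi + t > 0" using t0 q1 unfolding phi_rr using rb by (simp add: add_pos_nonneg)
  have tle: "real_of_int t \<le> real q * rr + rr^(j+2)" using c1 by linarith
  have "1 \<le> \<bar>real q * rr - t\<bar> * (real q * phi + t)"
    using N1 eq pos by (simp add: abs_mult)
  also have "\<dots> \<le> rr^(j+2) * (real q * phi + t)"
    using c pos by (intro mult_right_mono) auto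
  also have "\<dots> \<le> rr^(j+2) * (real q * (phi + rr) + (917/10000))"
    using tle small rb by (intro mult_left_mono) (auto simp: algebra_simps)
  finally have A: "1 \<le> rr^(j+2) * (real q * (phi + rr) + (917/10000))" .
  have "phi + rr = sqrt 5" unfolding rr_def phi_def by (simp add: field_simps)
  then have s5: "phi + rr < 224/100" using sqrt5_bounds by simp
  have s5': "phi + rr > 0" using rb unfolding phi_rr by simp
  have psi: "\<bar>(1-phi)^(j+1)\<bar> \<le> 1"
  proof -
    have "\<bar>1 - phi\<bar> = rr" unfolding phi_rr using rb by simp
    then have "\<bar>(1-phi)^(j+1)\<bar> = rr^(j+1)" by (metis power_abs)
    also have "\<dots> \<le> 1" using rb by (intro power_le_one) auto
    finally show ?thesis .
  qed
  have "real q * (phi + rr) \<le> (real (fib (j+1)) + 1) * (phi + rr)"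
    using q2 s5' by (intro mult_right_mono) auto
  also have "\<dots> = phi^(j+1) - (1-phi)^(j+1) + (phi + rr)" using binet2[of "j+1"] by (simp add: algebra_simps)
  also have "\<dots> \<le> phi^(j+1) + 324/100"
  proof -
    have "(1-phi)^(j+1) + 1 \<ge> 0" using psi by (simp add: abs_le_iff)
    then show ?thesis using s5 by linarith
  qed
  finally have B: "real q * (phi + rr) + (917/10000) \<le> phi^(j+1) + (33317/10000)" by linarith
  have "rr^(j+2) * (real q * (phi + rr) + (917/10000)) \<le> rr^(j+2) * (phi^(j+1) + (33317/10000))"
    using B rb by (intro mult_left_mono) auto
  also have "\<dots> = rr * (rr * phi)^(j+1) + (33317/10000) * rr^(j+2)"
    by (simp add: power_mult_distrib algebra_simps)
  also have "\<dots> = rr + (33317/10000) * rr^(j+2)" using rp by simp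
  also have "\<dots> < 1" using rb small by linarith
  finally show False using A by linarith
qed


lemma floor_shift:
  fixes q :: nat
  assumes j: "j \<ge> 3" and q1: "1 \<le> q" and q2: "q \<le> fib (j+1) + 1"
  shows "\<lfloor>real (fib (j+2) + q) * rr\<rfloor> = int (fib (j+1)) + \<lfloor>real q * rr\<rfloor>"
proof -
  define s where "s = \<lfloor>real q * rr\<rfloor>"
  define d where "d = real (fib (j+2)) * rr - fib (j+1)"
  have rb: "(6/10) < rr" "rr < (62/100)" by (rule rr_bounds)+
  have "d = rr * (real (fib (Suc (j+1))) - phi * fib (j+1))"
    unfolding d_def using rr_phi by (simp add: algebra_simps)
  also have "\<dots> = rr * (1-phi)^(j+1)" by (simp only: binet1)
  finally have dd: "d = rr * (1-phi)^(j+1)" .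
  have "\<bar>1 - phi\<bar> = rr" unfolding phi_rr using rb by simp
  then have "\<bar>d\<bar> = rr * rr^(j+1)" unfolding dd using rb by (simp add: abs_mult power_abs)
  then have ad: "\<bar>d\<bar> = rr^(j+2)" by simp
  have f1: "\<bar>real q * rr - s\<bar> > rr^(j+2)" by (rule far[OF j q1 q2])
  have f2: "\<bar>real q * rr - (s+1)\<bar> > rr^(j+2)" by (rule far[OF j q1 q2])
  have s1: "s \<le> real q * rr" "real q * rr < s + 1" unfolding s_def by linarith+
  have g1: "real q * rr - s > rr^(j+2)" using f1 s1 by (simp add: abs_if split: if_splits)
  have g2: "s + 1 - real q * rr > rr^(j+2)" using f2 s1 by (simp add: abs_if split: if_splits)
  have h: "s \<le> real q * rr + d \<and> real q * rr + d < s + 1" using g1 g2 ad by (auto simp: abs_le_iff abs_if split: if_splits)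
  have "real (fib (j+2) + q) * rr = real (fib (j+1)) + (real q * rr + d)"
    unfolding d_def by (simp add: algebra_simps)
  then have "\<lfloor>real (fib (j+2) + q) * rr\<rfloor> = \<lfloor>real_of_int (int (fib (j+1)) + s) + (real q * rr + d - s)\<rfloor>"
    by simp
  also have "\<dots> = int (fib (j+1)) + s + \<lfloor>real q * rr + d - s\<rfloor>" by (rule int_add_floor[symmetric])
  also have "\<lfloor>real q * rr + d - s\<rfloor> = 0" using h by (simp add: floor_eq_iff)
  finally show ?thesis by (simp add: s_def)
qed

definition W :: "nat \<Rightarrow> letter" where
  "W n = (if \<lfloor>real (n+1) * rr\<rfloor> - \<lfloor>real n * rr\<rfloor> = 1 then a else b)"

lemma W_shift:
  assumes j: "j \<ge> 3" and p1: "1 \<le> p" and p2: "p \<le> fib (j+1)"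
  shows "W (fib (j+2) + p) = W p"
proof -
  have A: "\<lfloor>real (fib (j+2) + p) * rr\<rfloor> = int (fib (j+1)) + \<lfloor>real p * rr\<rfloor>"
    using floor_shift[OF j p1] p2 by simp
  have B: "\<lfloor>real (fib (j+2) + (p+1)) * rr\<rfloor> = int (fib (j+1)) + \<lfloor>real (p+1) * rr\<rfloor>"
    using floor_shift[OF j, of "p+1"] p2 by simp
  show ?thesis unfolding W_def using A B by (simp add: add.assoc)
qed


lemma Wvals: "W 1 = a" "W 2 = b" "W 3 = a" "W 4 = a" "W 5 = b"
proof -
  have rb: "(6/10) < rr" "rr < (62/100)" by (rule rr_bounds)+
  have f: "\<lfloor>real (1::nat) * rr\<rfloor> = 0" "\<lfloor>real (2::nat) * rr\<rfloor> = 1" "\<lfloor>real (3::nat) * rr\<rfloor> = 1"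
     "\<lfloor>real (4::nat) * rr\<rfloor> = 2" "\<lfloor>real (5::nat) * rr\<rfloor> = 3" "\<lfloor>real (6::nat) * rr\<rfloor> = 3"
    using rb by (simp_all add: floor_eq_iff)
  show "W 1 = a" "W 2 = b" "W 3 = a" "W 4 = a" "W 5 = b"
    unfolding W_def using f by (simp_all add: numeral_eq_Suc)
qed

lemma fword_W: "j \<ge> 1 \<Longrightarrow> length (fword j) = fib (j+1) \<and> (\<forall>i < fib (j+1). fword j ! i = W (i+1))"
proof (induction j rule: less_induct)
  case (less j)
  consider "j = 1" | "j = 2" | "j = 3" | "j = 4" | "j \<ge> 5" using less.prems by linarith
  then show ?case
  proof cases
    case 1 then show ?thesis using Wvals by simp
  next
    case 2
    have "fib 3 = 2" by (simp add: numeral_eq_Suc)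
    then show ?thesis using Wvals 2 by (auto simp: numeral_eq_Suc less_Suc_eq)
  next
    case 3
    have "fib 4 = 3" by (simp add: numeral_eq_Suc)
    then show ?thesis using Wvals 3 by (auto simp: numeral_eq_Suc less_Suc_eq)
  next
    case 4
    have "fib 5 = 5" by (simp add: numeral_eq_Suc)
    then show ?thesis using Wvals 4 by (auto simp: numeral_eq_Suc less_Suc_eq)
  next
    case 5
    define i where "i = j - 2"
    have i: "j = i + 2" "i \<ge> 3" using 5 unfolding i_def by arith+
    have I1: "length (fword (i+1)) = fib (i+2) \<and> (\<forall>k < fib (i+2). fword (i+1) ! k = W (k+1))"
      using less.IH[of "i+1"] i by simp
    have I0: "length (fword i) = fib (i+1) \<and> (\<forall>k < fib (i+1). fword i ! k = W (k+1))"
      using less.IH[of i] i by simp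
    have fw: "fword j = fword (i+1) @ fword i" using i by simp
    have fb: "fib (j+1) = fib (i+2) + fib (i+1)" using i by (simp add: numeral_eq_Suc)
    show ?thesis
    proof
      show "length (fword j) = fib (j+1)" using fw fb I1 I0 by simp
      show "\<forall>k < fib (j+1). fword j ! k = W (k+1)"
      proof (intro allI impI)
        fix k assume k: "k < fib (j+1)"
        show "fword j ! k = W (k+1)"
        proof (cases "k < fib (i+2)")
          case True then show ?thesis using fw I1 by (simp add: nth_append)
        next
          case False
          define p where "p = k - fib (i+2)"
          have kp: "k = fib (i+2) + p" using False p_def by simp
          have pl: "p < fib (i+1)" using k kp fb by simp
          have "fword j ! k = fword i ! p" using fw I1 kp by (simp add: nth_append)
          also have "\<dots> = W (p+1)" using I0 pl by simp
          also have "\<dots> = W (fib (i+2) + (p+1))" using W_shift[OF i(2), of "p+1"] pl by simp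
          finally show ?thesis using kp by simp
        qed
      qed
    qed
  qed
qed


lemma n_lt_fib: "n < fib (n+3)"
proof (induction n)
  case 0 then show ?case by (simp add: numeral_eq_Suc)
next
  case (Suc n)
  have e1: "Suc n + 3 = n+2+2" "n+2+1 = n+3" by simp_all
  have e: "fib (Suc n + 3) = fib (n+3) + fib (n+2)" using fib_plus_2[of "n+2"] by (simp only: e1)
  have pos: "fib (n+2) > 0" by (rule fib_neq_0_nat) simp
  show ?case using e pos Suc.IH by linarith
qed

lemma fibword_W: "n \<ge> 1 \<Longrightarrow> fibword n = W n"
proof -
  assume n: "n \<ge> 1"
  have F: "length (fword (n+2)) = fib (n+3) \<and> (\<forall>i < fib (n+3). fword (n+2) ! i = W (i+1))"
  proof -
    have e: "n+2+1 = n+3" by simp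
    show ?thesis using fword_W[of "n+2"] unfolding e by simp
  qed
  have l: "n - 1 < fib (n+3)" using n_lt_fib[of n] by simp
  have "fword (n+2) ! (n-1) = W (n - 1 + 1)" using F l by blast
  then show ?thesis unfolding fibword_def using n by simp
qed

theorem proposition5:
  fixes z :: "nat list" and n n' :: nat
  assumes "set z \<subseteq> {0, 1}"
    and "n = fibval z"
    and "n' = fibval (z @ [0])"
    and "n \<ge> 1"
    and "fibword n = a"
  shows "\<lceil>real n / phi ^ 2\<rceil> = \<lceil>real n' / phi ^ 3\<rceil>"
proof -
  have rb: "(6/10) < rr" "rr < (62/100)" by (rule rr_bounds)+
  have rp: "rr * phi = 1" by (rule rr_phi)
  have php: "phi > 0" unfolding phi_rr using rb by simp
  have rinv: "rr = 1 / phi" using rp php by (simp add: field_simps)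
  have r2: "rr * rr = 1 - rr" using rr_sq by (simp add: power2_eq_square)
  have "W n = a" using assms(4,5) fibword_W by simp
  then have Wf: "\<lfloor>real (n+1) * rr\<rfloor> = \<lfloor>real n * rr\<rfloor> + 1" unfolding W_def by (simp split: if_splits)
  define K where "K = \<lfloor>real n * rr\<rfloor>"
  define x where "x = real n * rr"
  have k1: "real_of_int K \<le> x" "x < real_of_int K + 1" unfolding K_def x_def by linarith+
  have "real_of_int (K + 1) \<le> real (n+1) * rr" using Wf unfolding K_def by (metis of_int_floor_le)
  then have k2: "real_of_int K + 1 \<le> x + rr" unfolding x_def by (simp add: algebra_simps)
  have phn: "phi * real n = real n + x" unfolding x_def phi_rr by (simp add: algebra_simps)
  have nx: "real n = x + rr * x"
  proof -
    have "real n = real n * (rr * phi)" using rp by simp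
    also have "\<dots> = x * phi" unfolding x_def by (simp add: algebra_simps)
    finally show ?thesis unfolding phi_rr by (simp add: algebra_simps)
  qed
  have EB: "real n' - phi * real n < rr" "real n' - phi * real n > - (rr^2)"
  proof -
    note E = Ebound[OF assms(1)]
    have p1: "phi * rr^m > 0" for m using rb unfolding phi_rr by simp
    show "real n' - phi * real n < rr" "real n' - phi * real n > - (rr^2)"
      using E p1[of "length z + 2"] p1[of "length z + 3"] assms(2,3) by (cases "even (length z)"; auto)+
  qed
  have up: "real n' < real n + real_of_int K + 2" using EB(1) phn k1 rb by linarith
  have lo: "real n' > real n + real_of_int K" using EB(2) phn k2 rr_sq by linarith
  have "int n' < int n + K + 2" using up by linarith
  moreover have "int n' > int n + K" using lo by linarith
  ultimately have nn: "int n' = int n + K + 1" by linarith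
  then have nn': "real n' = real n + real_of_int K + 1" by linarith
  have L: "real n / phi^2 = real n - x"
  proof -
    have "real n / phi^2 = real n * (rr * rr)" unfolding rinv by (simp add: power2_eq_square)
    then show ?thesis using r2 unfolding x_def by (simp add: algebra_simps)
  qed
  have r3: "rr^3 = 2 * rr - 1"
  proof -
    have "rr^3 = rr * (rr * rr)" by (simp add: power3_eq_cube)
    also have "\<dots> = rr * (1 - rr)" using r2 by simp
    also have "\<dots> = rr - rr * rr" by (simp add: algebra_simps)
    finally show ?thesis using r2 by simp
  qed
  have R: "real n' / phi^3 = (real n + real_of_int K + 1) * (2 * rr - 1)"
  proof -
    have "real n' / phi^3 = real n' * rr^3" unfolding rinv by (simp add: power3_eq_cube)
    then show ?thesis using nn' r3 by simp
  qed
  have R2: "(real n + real_of_int K + 1) * (2 * rr - 1) = 2 * x + 2 * (rr * real_of_int K) + 2 * rr - real n - real_of_int K - 1"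
    unfolding x_def by (simp add: algebra_simps)
  have M1: "rr * x < rr * (real_of_int K + 1)" using k1 rb by (intro mult_strict_left_mono) auto
  have M2: "rr * (real_of_int K + 1) \<le> rr * (x + rr)" using k2 rb by (intro mult_left_mono) auto
  have lhs: "\<lceil>real n / phi^2\<rceil> = int n - K"
    unfolding L ceiling_eq_iff using k1 by simp
  have rhs: "\<lceil>real n' / phi^3\<rceil> = int n - K"
    unfolding R R2 ceiling_eq_iff using M1 M2 nx r2 rb by (simp add: algebra_simps)
  show ?thesis using lhs rhs by simp
qed

end
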